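(* Let $A$ be a linear Nakayama algebra and $M$ an indecomposable $A$-module with $\operatorname{char}M=(z_1,\dots,z_m)$. Then every non-zero subfactor $X$ of $M$ satisfies $\operatorname{pd}X\le1+\max_i z_i$.
   Context: A linear Nakayama algebra is a basic $kQ/I$ ($k$ a field) with $Q$ a linearly oriented path; it has finite global dimension; modules are finitely generated left modules and indecomposables are uniserial. An indecomposable module is even/odd according to the parity of its projective dimension. For indecomposable $M$ with composition factors $F_1=\operatorname{soc}M,\dots,F_m=\operatorname{top}M$ (from bottom to top), $\operatorname{char}M=(z_1,\dots,z_m)$ with $z_i=\operatorname{pd}F_i$ if $F_i$ is odd and $z_i=\operatorname{pd}M$ if $F_i$ is even. A subfactor of $M$ is a module $M_2/M_1$ with $M_1\subseteq M_2\subseteq M$ submodules. *)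

theory Defs
  imports Main
begin

(* Combinatorial model of a linear Nakayama algebra A = kQ/I, Q : 0 -> 1 -> ... -> n-1,
   via its Kupisch series c.  P_i = M(i, c i) has composition factors
   S_i (top), S_(i+1), ..., S_(i + c i - 1) (socle).
   Indecomposable modules (all uniserial) are M(i,l) with i < n, 1 <= l <= c i:
   top S_i, composition factors S_i, ..., S_(i+l-1), socle S_(i+l-1). *)

definition kupisch :: "nat \<Rightarrow> (nat \<Rightarrow> nat) \<Rightarrow> bool" where
  "kupisch n c \<longleftrightarrow> n \<ge> 1 \<and> (\<forall>i<n. c i \<ge> 1) \<and> c (n - 1) = 1
     \<and> (\<forall>i. i + 1 < n \<longrightarrow> c i \<le> c (i + 1) + 1)"

definition indec :: "nat \<Rightarrow> (nat \<Rightarrow> nat) \<Rightarrow> nat \<times> nat \<Rightarrow> bool" where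
  "indec n c M \<longleftrightarrow> fst M < n \<and> 1 \<le> snd M \<and> snd M \<le> c (fst M)"

(* Projective dimension of M(i,l): projective iff l = c i; otherwise the syzygy is
   M(i+l, c i - l) (kernel of the projective cover P_i -> M(i,l)). *)
function pd :: "nat \<Rightarrow> (nat \<Rightarrow> nat) \<Rightarrow> nat \<Rightarrow> nat \<Rightarrow> nat" where
  "pd n c i l = (if n \<le> i \<or> l = 0 \<or> c i \<le> l then 0
                 else Suc (pd n c (i + l) (c i - l)))"
  by pat_completeness auto
termination
  by (relation "measure (\<lambda>(n, c, i, l). n - i)") auto

definition pdM :: "nat \<Rightarrow> (nat \<Rightarrow> nat) \<Rightarrow> nat \<times> nat \<Rightarrow> nat" where
  "pdM n c M = pd n c (fst M) (snd M)"

(* char M = (z_1,...,z_m), listed from the socle F_1 = S_(i+l-1) up to the top F_m = S_i;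
   simple S_j = M(j,1). *)
definition charM :: "nat \<Rightarrow> (nat \<Rightarrow> nat) \<Rightarrow> nat \<times> nat \<Rightarrow> nat list" where
  "charM n c M = map (\<lambda>j. if odd (pd n c j 1) then pd n c j 1 else pdM n c M)
                    (rev [fst M..<fst M + snd M])"

(* Submodules of the uniserial M(i,l) are M(i+l-k, k), 0 <= k <= l (the bottom k factors;
   k = 0 is the zero module).  A subfactor M2/M1 with M1 = M(i+l-k1,k1) \<subseteq> M2 = M(i+l-k2,k2)
   is M(i+l-k2, k2-k1); it is non-zero iff k1 < k2. *)
definition nonzero_subfactor :: "nat \<times> nat \<Rightarrow> nat \<times> nat \<Rightarrow> bool" where
  "nonzero_subfactor X M \<longleftrightarrow> (\<exists>k1 k2. k1 < k2 \<and> k2 \<le> snd M \<and>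
      X = (fst M + snd M - k2, k2 - k1))"

end

theory Submission
  imports Defs
begin

declare pd.simps[simp del]

lemma arith_min: "Suc (min (2 * A - 1) (2 * (B - 1))) = min (2 * B - 1) (2 * A)"
      if "1 \<le> A" "1 \<le> B" for A B :: nat
proof (cases "A < B")
  case True
  then have "min (2 * A - 1) (2 * (B - 1)) = 2 * A - 1" "min (2 * B - 1) (2 * A) = 2 * A"
    using that by (simp_all add: min_def)
  then show ?thesis using that by simp
next
  case False
  then have "min (2 * A - 1) (2 * (B - 1)) = 2 * (B - 1)" "min (2 * B - 1) (2 * A) = 2 * B - 1"
    using that by (simp_all add: min_def)
  then show ?thesis using that by simp
qed

locale kup =
  fixes n :: nat and c :: "nat \<Rightarrow> nat"
  assumes kp: "kupisch n c"
begin

definition g :: "nat \<Rightarrow> nat" where "g x = (if x < n then x + c x else n)"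
definition gi :: "nat \<Rightarrow> nat \<Rightarrow> nat" where "gi r x = (g ^^ r) x"
definition E :: "nat \<Rightarrow> nat \<Rightarrow> nat" where "E x y = (LEAST r. gi r x = gi r y)"

lemma c_pos: "i < n \<Longrightarrow> 1 \<le> c i"
  using kp unfolding kupisch_def by auto

lemma c_step: "i + 1 < n \<Longrightarrow> c i \<le> c (i + 1) + 1"
  using kp unfolding kupisch_def by auto

lemma c_bound: "i < n \<Longrightarrow> i + c i \<le> n"
proof (induction "n - i" arbitrary: i)
  case 0
  then show ?case by simp
next
  case (Suc k)
  show ?case
  proof (cases "i + 1 < n")
    case True
    have "i + 1 + c (i + 1) \<le> n" using Suc.hyps(1)[of "i+1"] Suc.hyps(2) True by simp
    then show ?thesis using c_step[OF True] by simp
  next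
    case False
    then have "i = n - 1" using Suc.prems by simp
    then show ?thesis using kp Suc.prems unfolding kupisch_def by auto
  qed
qed

lemma c_mono: "i \<le> j \<Longrightarrow> j < n \<Longrightarrow> i + c i \<le> j + c j"
proof (induction j)
  case 0
  then show ?case by simp
next
  case (Suc j)
  show ?case
  proof (cases "i = Suc j")
    case True
    then show ?thesis by simp
  next
    case False
    then have "i \<le> j" using Suc.prems by simp
    then have "i + c i \<le> j + c j" using Suc by simp
    moreover have "c j \<le> c (j + 1) + 1" using c_step[of j] Suc.prems by simp
    ultimately show ?thesis by simp
  qed
qed

lemma g_le: "g x \<le> n"
  using c_bound by (simp add: g_def)

lemma g_gt: "x < n \<Longrightarrow> x < g x"
  using c_pos[of x] by (simp add: g_def)

lemma g_mono: "x \<le> y \<Longrightarrow> g x \<le> g y"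
  using c_mono[of x y] g_le[of x] by (auto simp: g_def)

lemma gi_0[simp]: "gi 0 x = x" by (simp add: gi_def)

lemma gi_Suc: "gi (Suc r) x = gi r (g x)"
  by (simp only: gi_def funpow_Suc_right o_apply)

lemma gi_Suc2: "gi (Suc r) x = g (gi r x)"
  by (simp add: gi_def)

lemma gi_add: "gi (k + r) x = gi k (gi r x)"
  by (simp add: gi_def funpow_add)

lemma gi_mono: "x \<le> y \<Longrightarrow> gi r x \<le> gi r y"
  by (induction r) (auto simp: gi_Suc2 g_mono)

lemma gi_le: "x \<le> n \<Longrightarrow> gi r x \<le> n"
  by (induction r) (auto simp: gi_Suc2 g_le)

lemma gi_ge: "x \<le> n \<Longrightarrow> min n (x + r) \<le> gi r x"
proof (induction r)
  case 0
  then show ?case by simp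
next
  case (Suc r)
  show ?case
  proof (cases "gi r x < n")
    case True
    then have "x + r \<le> gi r x" using Suc by simp
    moreover have "gi r x < g (gi r x)" using g_gt[OF True] .
    ultimately show ?thesis by (simp add: gi_Suc2)
  next
    case False
    then have "gi r x = n" using gi_le[OF Suc.prems] by (simp add: le_antisym)
    then show ?thesis by (simp add: gi_Suc2 g_def)
  qed
qed

lemma gi_n: "x \<le> n \<Longrightarrow> gi n x = n"
  using gi_ge[of x n] gi_le[of x n] by simp

lemma gi_prop: "gi r x = gi r y \<Longrightarrow> r \<le> s \<Longrightarrow> gi s x = gi s y"
proof -
  assume a: "gi r x = gi r y" "r \<le> s"
  then obtain k where "s = k + r" by (metis le_add_diff_inverse2)
  then show ?thesis using a by (simp add: gi_add)
qed

lemma E_le_iff: "x \<le> n \<Longrightarrow> y \<le> n \<Longrightarrow> E x y \<le> r \<longleftrightarrow> gi r x = gi r y"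
proof -
  assume xy: "x \<le> n" "y \<le> n"
  have ex: "gi n x = gi n y" using gi_n xy by simp
  have L: "gi (E x y) x = gi (E x y) y"
    unfolding E_def by (rule LeastI[of _ n]) (rule ex)
  show ?thesis
  proof
    assume "E x y \<le> r" then show "gi r x = gi r y" using gi_prop L by blast
  next
    assume "gi r x = gi r y" then show "E x y \<le> r" unfolding E_def by (rule Least_le)
  qed
qed

lemma E_0[simp]: "E x x = 0"
  unfolding E_def by simp

lemma E_pos: "x \<le> n \<Longrightarrow> y \<le> n \<Longrightarrow> x \<noteq> y \<Longrightarrow> 1 \<le> E x y"
  using E_le_iff[of x y 0] by simp

lemma E_max: "x \<le> y \<Longrightarrow> y \<le> z \<Longrightarrow> z \<le> n \<Longrightarrow> E x z = max (E x y) (E y z)"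
proof -
  assume a: "x \<le> y" "y \<le> z" "z \<le> n"
  have iff: "E x z \<le> r \<longleftrightarrow> max (E x y) (E y z) \<le> r" for r
  proof -
    have "gi r x \<le> gi r y" "gi r y \<le> gi r z" using a gi_mono by auto
    then have "gi r x = gi r z \<longleftrightarrow> gi r x = gi r y \<and> gi r y = gi r z" by auto
    then show ?thesis using E_le_iff a by auto
  qed
  have 1: "E x z \<le> max (E x y) (E y z)" using iff[of "max (E x y) (E y z)"] by simp
  have 2: "max (E x y) (E y z) \<le> E x z" using iff[of "E x z"] by simp
  show ?thesis using 1 2 by (rule antisym)
qed

lemma E_mono: "x \<le> x' \<Longrightarrow> x' \<le> y' \<Longrightarrow> y' \<le> y \<Longrightarrow> y \<le> n \<Longrightarrow> E x' y' \<le> E x y"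
proof -
  assume a: "x \<le> x'" "x' \<le> y'" "y' \<le> y" "y \<le> n"
  have "E x y = max (E x x') (E x' y)" using E_max[of x x' y] a by simp
  moreover have "E x' y = max (E x' y') (E y' y)" using E_max[of x' y' y] a by simp
  ultimately show ?thesis by simp
qed

lemma E_g: "x \<le> n \<Longrightarrow> y \<le> n \<Longrightarrow> E (g x) (g y) = E x y - 1"
proof -
  assume a: "x \<le> n" "y \<le> n"
  have iff: "E (g x) (g y) \<le> r \<longleftrightarrow> E x y \<le> Suc r" for r
    using E_le_iff[of "g x" "g y" r] E_le_iff[of x y "Suc r"] a g_le by (simp add: gi_Suc)
  have 1: "E x y \<le> Suc (E (g x) (g y))" using iff[of "E (g x) (g y)"] by simp
  have 2: "E (g x) (g y) \<le> E x y - 1" using iff[of "E x y - 1"] by simp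
  show ?thesis using 1 2 by simp
qed

lemma E_ex: "x < y \<Longrightarrow> y \<le> n \<Longrightarrow> \<exists>j. x \<le> j \<and> j < y \<and> E x y = E j (Suc j)"
proof (induction y)
  case 0
  then show ?case by simp
next
  case (Suc y)
  show ?case
  proof (cases "x = y")
    case True
    then show ?thesis by auto
  next
    case False
    then have xy: "x < y" using Suc.prems by simp
    then obtain j where j: "x \<le> j" "j < y" "E x y = E j (Suc j)" using Suc by auto
    have m: "E x (Suc y) = max (E x y) (E y (Suc y))" using E_max[of x y "Suc y"] xy Suc.prems by simp
    show ?thesis
    proof (cases "E x y \<le> E y (Suc y)")
      case True
      then show ?thesis using m xy by (intro exI[of _ y]) auto
    next
      case False
      then show ?thesis using m j by (intro exI[of _ j]) auto
    qed
  qed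
qed

lemma pd_formula:
  "x < n \<Longrightarrow> x < y \<Longrightarrow> y \<le> g x \<Longrightarrow>
     pd n c x (y - x) = min (2 * E x y - 1) (2 * E y (g x))"
proof (induction "n - x" arbitrary: x y rule: less_induct)
  case less
  show ?case
  proof (cases "y = g x")
    case True
    then have "c x \<le> y - x" using less.prems by (simp add: g_def)
    then show ?thesis using True by (subst pd.simps) simp
  next
    case False
    then have yl: "y < g x" using less.prems by simp
    have gx: "g x = x + c x" using less.prems by (simp add: g_def)
    have yn: "y < n" using yl g_le[of x] by simp
    have cx: "\<not> c x \<le> y - x" using yl gx less.prems by simp
    have "pd n c x (y - x) = Suc (pd n c (x + (y - x)) (c x - (y - x)))"
      using less.prems cx by (subst pd.simps) simp
    also have "x + (y - x) = y" using less.prems by simp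
    also have "c x - (y - x) = g x - y" using gx less.prems by simp
    finally have p: "pd n c x (y - x) = Suc (pd n c y (g x - y))" .
    have gxy: "g x \<le> g y" using g_mono less.prems by simp
    have ih: "pd n c y (g x - y) = min (2 * E y (g x) - 1) (2 * E (g x) (g y))"
      using less.hyps[of y "g x"] less.prems yn yl gxy by simp
    have e1: "E (g x) (g y) = E x y - 1" using E_g less.prems yn by simp
    have p1: "1 \<le> E x y" using E_pos less.prems yn by simp
    have p2: "1 \<le> E y (g x)" using E_pos yl yn g_le[of x] by simp
    show ?thesis using p ih e1 arith_min[OF p2 p1] by simp
  qed
qed

lemma main:
  assumes iM: "indec n c M" and sf: "nonzero_subfactor X M"
  shows "pdM n c X \<le> 1 + Max (set (charM n c M))"
proof -
  obtain u l where M: "M = (u, l)" by (cases M)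
  have u: "u < n" "1 \<le> l" "l \<le> c u" using iM M by (auto simp: indec_def)
  define v where "v = u + l"
  have gu: "g u = u + c u" using u by (simp add: g_def)
  have uv: "u < v" "v \<le> g u" using u gu v_def by auto
  have gun: "g u \<le> n" by (rule g_le)
  obtain k1 k2 where k: "k1 < k2" "k2 \<le> l" "X = (u + l - k2, k2 - k1)"
    using sf M by (auto simp: nonzero_subfactor_def)
  define a where "a = u + l - k2"
  define b where "b = u + l - k1"
  have ab: "u \<le> a" "a < b" "b \<le> v" using k a_def b_def v_def by auto
  have Xab: "X = (a, b - a)" using k a_def b_def by auto
  have vn: "v \<le> n" using uv gun by simp
  have an: "a < n" using ab vn by simp
  have gua: "g u \<le> g a" using g_mono ab by simp
  define z where "z j = (if odd (pd n c j 1) then pd n c j 1 else pdM n c M)" for j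
  have setc: "set (charM n c M) = z ` {u..<v}" using M v_def by (simp add: charM_def z_def)
  have fin: "finite (set (charM n c M))" by simp
  define W where "W = E v (g u)"
  have t: "pdM n c X = min (2 * E a b - 1) (2 * E b (g a))"
    using pd_formula[of a b] Xab an ab uv gua by (simp add: pdM_def)
  have pM: "pdM n c M = min (2 * E u v - 1) (2 * W)"
    using pd_formula[of u v] M v_def u uv W_def by (simp add: pdM_def)
  have S: "pd n c j 1 = min (2 * E j (Suc j) - 1) (2 * E (Suc j) (g j))" if "j < n" for j
    using pd_formula[of j "Suc j"] g_gt[OF that] that by simp
  have O: "E (Suc j) (g j) = max (E (Suc j) v) (max W (E u j - 1))" if "u \<le> j" "j < v" for j
  proof -
    have gj: "g u \<le> g j" "g j \<le> n" using g_mono that g_le by auto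
    have 1: "E (Suc j) (g j) = max (E (Suc j) v) (E v (g j))"
      using E_max[of "Suc j" v "g j"] that gj uv by simp
    have 2: "E v (g j) = max W (E (g u) (g j))"
      using E_max[of v "g u" "g j"] gj uv W_def by simp
    have 3: "E (g u) (g j) = E u j - 1" using E_g[of u j] u that vn by simp
    show ?thesis using 1 2 3 by simp
  qed
  have OX: "E b (g a) = max (E b v) (max W (E u a - 1))"
  proof -
    have 1: "E b (g a) = max (E b v) (E v (g a))"
      using E_max[of b v "g a"] ab uv gua g_le by simp
    have 2: "E v (g a) = max W (E (g u) (g a))"
      using E_max[of v "g u" "g a"] gua uv W_def g_le by simp
    have 3: "E (g u) (g a) = E u a - 1" using E_g[of u a] u ab an by simp
    show ?thesis using 1 2 3 by simp
  qed
  have zodd: "z j = 2 * E j (Suc j) - 1" if "u \<le> j" "j < v" "E j (Suc j) \<le> E (Suc j) (g j)" for j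
  proof -
    have "1 \<le> E j (Suc j)" using E_pos[of j "Suc j"] that vn by simp
    then have "pd n c j 1 = 2 * E j (Suc j) - 1" using S[of j] that vn by simp
    moreover have "odd (2 * E j (Suc j) - 1)" using \<open>1 \<le> E j (Suc j)\<close> by simp
    ultimately show ?thesis by (simp add: z_def)
  qed
  have zeven: "z j = pdM n c M" if "u \<le> j" "j < v" "E (Suc j) (g j) < E j (Suc j)" for j
  proof -
    have "pd n c j 1 = 2 * E (Suc j) (g j)" using S[of j] that vn by simp
    then show ?thesis by (simp add: z_def)
  qed
  have key: "\<exists>j. u \<le> j \<and> j < v \<and> pdM n c X \<le> 1 + z j"
  proof -
    obtain j1 where j1: "a \<le> j1" "j1 < b" "E a b = E j1 (Suc j1)"
      using E_ex[of a b] ab vn by auto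
    have j1M: "u \<le> j1" "j1 < v" using j1 ab by auto
    show ?thesis
    proof (cases "E j1 (Suc j1) \<le> E (Suc j1) (g j1)")
      case True
      then have "z j1 = 2 * E j1 (Suc j1) - 1" using zodd j1M by simp
      then show ?thesis using t j1 j1M by (intro exI[of _ j1]) auto
    next
      case False
      then have ev: "E (Suc j1) (g j1) < E j1 (Suc j1)" by simp
      have Oj1: "E (Suc j1) (g j1) = max (E (Suc j1) v) (max W (E u j1 - 1))" using O j1M by simp
      have m1: "E (Suc j1) v < E j1 (Suc j1)" "W < E j1 (Suc j1)" "E u j1 - 1 < E j1 (Suc j1)"
        using ev Oj1 by auto
      show ?thesis
      proof (cases "pdM n c X \<le> 2 * W")
        case True
        have "E j1 (Suc j1) \<le> E u v" using E_mono[of u j1 "Suc j1" v] j1M vn by simp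
        then have "pdM n c M = 2 * W" using pM ev Oj1 by simp
        then show ?thesis using True zeven[OF j1M ev] j1M by (intro exI[of _ j1]) auto
      next
        case False
        have "pdM n c X \<le> 2 * E b (g a)" using t by simp
        then have "pdM n c X \<le> 2 * max (E b v) (max W (E u a - 1))" using OX by simp
        then have c2: "pdM n c X \<le> 2 * E b v \<or> pdM n c X \<le> 2 * (E u a - 1)"
          using False by (simp add: max_def split: if_splits)
        show ?thesis
        proof (cases "pdM n c X \<le> 2 * E b v")
          case True
          show ?thesis
          proof (cases "b < v")
            case False
            then have "pdM n c X = 0" using True ab by simp
            then show ?thesis using j1M by auto
          next
            case bv: True
            obtain j0 where j0: "b \<le> j0" "j0 < v" "E b v = E j0 (Suc j0)"
              using E_ex[of b v] bv vn by auto
            have j0M: "u \<le> j0" "j0 < v" using j0 ab by auto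
            have "E b v \<le> E (Suc j1) v" using E_mono[of "Suc j1" b v v] j1 j0 vn by simp
            then have lt: "E j0 (Suc j0) < E j1 (Suc j1)" using j0 ev Oj1 by simp
            have "E j1 (Suc j1) \<le> E u j0" using E_mono[of u j1 "Suc j1" j0] j1M j1 j0 vn by simp
            then have "E j0 (Suc j0) \<le> E (Suc j0) (g j0)" using O[OF j0M] lt by simp
            then have "z j0 = 2 * E j0 (Suc j0) - 1" using zodd j0M by simp
            then show ?thesis using True j0 j0M by (intro exI[of _ j0]) auto
          qed
        next
          case False
          then have T2: "pdM n c X \<le> 2 * (E u a - 1)" using c2 by simp
          show ?thesis
          proof (cases "u < a")
            case False
            then have "pdM n c X = 0" using T2 ab by simp
            then show ?thesis using j1M by auto
          next
            case ua: True
            obtain j0 where j0: "u \<le> j0" "j0 < a" "E u a = E j0 (Suc j0)"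
              using E_ex[of u a] ua an by auto
            have j0M: "u \<le> j0" "j0 < v" using j0 ab by auto
            have "E u a \<le> E u j1" using E_mono[of u u a j1] j1 ab j1M vn by simp
            then have le: "E j0 (Suc j0) \<le> E j1 (Suc j1)" using j0 m1 by linarith
            have "E j1 (Suc j1) \<le> E (Suc j0) v" using E_mono[of "Suc j0" j1 "Suc j1" v] j1M j1 j0 vn by simp
            then have "E j0 (Suc j0) \<le> E (Suc j0) (g j0)" using O[OF j0M] le by simp
            then have "z j0 = 2 * E j0 (Suc j0) - 1" using zodd j0M by simp
            then show ?thesis using T2 j0 j0M by (intro exI[of _ j0]) auto
          qed
        qed
      qed
    qed
  qed
  then obtain j where j: "u \<le> j" "j < v" "pdM n c X \<le> 1 + z j" by blast
  have "z j \<in> set (charM n c M)" using setc j by auto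
  then have "z j \<le> Max (set (charM n c M))" using fin by simp
  then show ?thesis using j by simp
qed

end

theorem proposition4p9:
  fixes n :: nat and c :: "nat \<Rightarrow> nat" and M X :: "nat \<times> nat"
  assumes "kupisch n c"
    and "indec n c M"
    and "nonzero_subfactor X M"
  shows "pdM n c X \<le> 1 + Max (set (charM n c M))"
proof -
  interpret kup n c using assms(1) by unfold_locales
  show ?thesis using main assms(2,3) by blast
qed

end
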